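(* Under the standing assumptions, the commutator of $R^\beta$ in $R$ satisfies $$V_R(R^\beta)=\bigoplus_{g\in\mathcal G}J_g,$$ i.e. $V_R(R^\beta)=\sum_{g\in\mathcal G}J_g$ and this sum of $C(R)$-submodules of $R$ is direct.
   Context: All rings and algebras are associative and unital. A groupoid is a nonempty set $\mathcal G$ with a partially defined associative multiplication in which every $g$ has an inverse $g^{-1}$, a left identity $r(g)=gg^{-1}$ and a right identity $d(g)=g^{-1}g$; $gh$ is defined iff $d(g)=r(h)$; $\mathcal G_0$ is the set of identities. Standing assumptions: $K$ is a commutative ring, $R$ a $K$-algebra, $\mathcal G$ a finite groupoid, $\beta=(\{E_g\}_{g\in\mathcal G},\{\beta_g\}_{g\in\mathcal G})$ a unital action of $\mathcal G$ on $R$, meaning: for each $g$, $E_g=E_{r(g)}$ is an ideal of $R$ which is a unital ring with identity $1_g$ (so $1_{g^{-1}}=1_{d(g)}$), $\beta_g:E_{g^{-1}}\to E_g$ is a $K$-algebra isomorphism, $\beta_e=\mathrm{id}_{E_e}$ for $e\in\mathcal G_0$, and $\beta_g\beta_h(x)=\beta_{gh}(x)$ whenever $d(g)=r(h)$, $x\in E_{h^{-1}}$. Moreover $R=\bigoplus_{e\in\mathcal G_0}E_e$, and $R$ is a $\beta$-Galois extension of $R^\beta=\{r\in R:\beta_g(r1_{g^{-1}})=r1_g\ \forall g\in\mathcal G\}$, i.e. there exist $x_1,\dots,x_m,y_1,\dots,y_m\in R$ with $\sum_i x_i\beta_g(y_i1_{g^{-1}})=1_g$ if $g\in\mathcal G_0$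 and $=0$ otherwise. $C(R)$ is the center of $R$; for subrings $S_1,S_2$ of $R$, $V_{S_2}(S_1)=\{r\in S_2: rs=sr\ \forall s\in S_1\}$. For $g\in\mathcal G$, $J_g=\{r\in E_g: r\beta_g(x1_{g^{-1}})=xr \text{ for all } x\in R\}$, a $C(R)$-submodule of $R$. *)

theory Defs
  imports Main
begin

text \<open>Finite groupoid: carrier G, multiplication mul (only meaningful on composable
pairs, i.e. when gdom g = gran h), inverse ginv.\<close>

definition gran :: "('g \<Rightarrow> 'g \<Rightarrow> 'g) \<Rightarrow> ('g \<Rightarrow> 'g) \<Rightarrow> 'g \<Rightarrow> 'g" where
  "gran mul ginv g = mul g (ginv g)"

definition gdom :: "('g \<Rightarrow> 'g \<Rightarrow> 'g) \<Rightarrow> ('g \<Rightarrow> 'g) \<Rightarrow> 'g \<Rightarrow> 'g" where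
  "gdom mul ginv g = mul (ginv g) g"

definition groupoid :: "'g set \<Rightarrow> ('g \<Rightarrow> 'g \<Rightarrow> 'g) \<Rightarrow> ('g \<Rightarrow> 'g) \<Rightarrow> bool" where
  "groupoid G mul ginv \<longleftrightarrow>
     G \<noteq> {} \<and>
     (\<forall>g\<in>G. ginv g \<in> G \<and> ginv (ginv g) = g) \<and>
     (\<forall>g\<in>G. \<forall>h\<in>G. gdom mul ginv g = gran mul ginv h \<longrightarrow>
        mul g h \<in> G \<and> gran mul ginv (mul g h) = gran mul ginv g
        \<and> gdom mul ginv (mul g h) = gdom mul ginv h) \<and>
     (\<forall>g\<in>G. \<forall>h\<in>G. \<forall>l\<in>G. gdom mul ginv g = gran mul ginv h \<longrightarrow> gdom mul ginv h = gran mul ginv l \<longrightarrow>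
        mul (mul g h) l = mul g (mul h l)) \<and>
     (\<forall>g\<in>G. mul (gran mul ginv g) g = g \<and> mul g (gdom mul ginv g) = g)"

definition gidents :: "'g set \<Rightarrow> ('g \<Rightarrow> 'g \<Rightarrow> 'g) \<Rightarrow> ('g \<Rightarrow> 'g) \<Rightarrow> 'g set" where
  "gidents G mul ginv = gdom mul ginv ` G"

definition is_algebra :: "('k::comm_ring_1 \<Rightarrow> 'r::ring_1 \<Rightarrow> 'r) \<Rightarrow> bool" where
  "is_algebra sc \<longleftrightarrow>
     (\<forall>a x y. sc a (x + y) = sc a x + sc a y) \<and>
     (\<forall>a b x. sc (a + b) x = sc a x + sc b x) \<and>
     (\<forall>a b x. sc (a * b) x = sc a (sc b x)) \<and>
     (\<forall>x. sc 1 x = x) \<and>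
     (\<forall>a x y. sc a (x * y) = sc a x * y \<and> sc a (x * y) = x * sc a y)"

definition is_ideal :: "'r::ring_1 set \<Rightarrow> bool" where
  "is_ideal I \<longleftrightarrow> 0 \<in> I \<and> (\<forall>x\<in>I. \<forall>y\<in>I. x + y \<in> I) \<and> (\<forall>x\<in>I. - x \<in> I) \<and>
     (\<forall>x\<in>I. \<forall>r. r * x \<in> I \<and> x * r \<in> I)"

text \<open>Unital action of the groupoid on R (whole type) with R = direct sum of the E_e.\<close>
definition unital_action ::
  "('k::comm_ring_1 \<Rightarrow> 'r::ring_1 \<Rightarrow> 'r) \<Rightarrow> 'g set \<Rightarrow> ('g \<Rightarrow> 'g \<Rightarrow> 'g) \<Rightarrow> ('g \<Rightarrow> 'g)
    \<Rightarrow> ('g \<Rightarrow> 'r set) \<Rightarrow> ('g \<Rightarrow> 'r) \<Rightarrow> ('g \<Rightarrow> 'r \<Rightarrow> 'r) \<Rightarrow> bool" where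
  "unital_action sc G mul ginv E one \<beta> \<longleftrightarrow>
     (\<forall>g\<in>G. E g = E (gran mul ginv g)) \<and>
     (\<forall>g\<in>G. is_ideal (E g)) \<and>
     (\<forall>g\<in>G. one g \<in> E g \<and> (\<forall>x\<in>E g. one g * x = x \<and> x * one g = x)) \<and>
     (\<forall>g\<in>G. one g = one (gran mul ginv g)) \<and>
     (\<forall>g\<in>G. bij_betw (\<beta> g) (E (ginv g)) (E g) \<and>
        (\<forall>x\<in>E (ginv g). \<forall>y\<in>E (ginv g). \<beta> g (x + y) = \<beta> g x + \<beta> g y \<and> \<beta> g (x * y) = \<beta> g x * \<beta> g y) \<and>
        (\<forall>a. \<forall>x\<in>E (ginv g). \<beta> g (sc a x) = sc a (\<beta> g x)) \<and>
        \<beta> g (one (ginv g)) = one g) \<and>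
     (\<forall>e\<in>gidents G mul ginv. \<forall>x\<in>E e. \<beta> e x = x) \<and>
     (\<forall>g\<in>G. \<forall>h\<in>G. gdom mul ginv g = gran mul ginv h \<longrightarrow>
        (\<forall>x\<in>E (ginv h). \<beta> g (\<beta> h x) = \<beta> (mul g h) x)) \<and>
     (\<forall>x. \<exists>!f. (\<forall>e\<in>gidents G mul ginv. f e \<in> E e) \<and> (\<forall>e. e \<notin> gidents G mul ginv \<longrightarrow> f e = 0)
            \<and> x = (\<Sum>e\<in>gidents G mul ginv. f e))"

definition invariants :: "'g set \<Rightarrow> ('g \<Rightarrow> 'g) \<Rightarrow> ('g \<Rightarrow> 'r::ring_1) \<Rightarrow> ('g \<Rightarrow> 'r \<Rightarrow> 'r) \<Rightarrow> 'r set" where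
  "invariants G ginv one \<beta> = {r. \<forall>g\<in>G. \<beta> g (r * one (ginv g)) = r * one g}"

definition galois_ext :: "'g set \<Rightarrow> ('g \<Rightarrow> 'g \<Rightarrow> 'g) \<Rightarrow> ('g \<Rightarrow> 'g) \<Rightarrow> ('g \<Rightarrow> 'r::ring_1) \<Rightarrow> ('g \<Rightarrow> 'r \<Rightarrow> 'r) \<Rightarrow> bool" where
  "galois_ext G mul ginv one \<beta> \<longleftrightarrow>
     (\<exists>m::nat. \<exists>x y :: nat \<Rightarrow> 'r. \<forall>g\<in>G.
        (\<Sum>i<m. x i * \<beta> g (y i * one (ginv g))) = (if g \<in> gidents G mul ginv then one g else 0))"

definition commutant :: "'r::ring_1 set \<Rightarrow> 'r set \<Rightarrow> 'r set" where
  "commutant S2 S1 = {r\<in>S2. \<forall>s\<in>S1. r * s = s * r}"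

definition Jset :: "('g \<Rightarrow> 'g) \<Rightarrow> ('g \<Rightarrow> 'r set) \<Rightarrow> ('g \<Rightarrow> 'r::ring_1) \<Rightarrow> ('g \<Rightarrow> 'r \<Rightarrow> 'r) \<Rightarrow> 'g \<Rightarrow> 'r set" where
  "Jset ginv E one \<beta> g = {r\<in>E g. \<forall>x. r * \<beta> g (x * one (ginv g)) = x * r}"

end

theory Submission
  imports Defs
begin

locale GA =
  fixes sc :: "'k::comm_ring_1 \<Rightarrow> 'r::ring_1 \<Rightarrow> 'r"
    and G :: "'g set" and mul :: "'g \<Rightarrow> 'g \<Rightarrow> 'g" and ginv :: "'g \<Rightarrow> 'g"
    and E :: "'g \<Rightarrow> 'r set" and one :: "'g \<Rightarrow> 'r" and \<beta> :: "'g \<Rightarrow> 'r \<Rightarrow> 'r"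
  assumes grp: "groupoid G mul ginv" and fin: "finite G"
    and act: "unital_action sc G mul ginv E one \<beta>"
begin

abbreviation rr where "rr g \<equiv> gran mul ginv g"
abbreviation dd where "dd g \<equiv> gdom mul ginv g"
abbreviation G0 where "G0 \<equiv> gidents G mul ginv"

lemma inv: "g\<in>G \<Longrightarrow> ginv g \<in> G" "g\<in>G \<Longrightarrow> ginv (ginv g) = g"
  using grp unfolding groupoid_def by auto
lemma comp: "g\<in>G \<Longrightarrow> h\<in>G \<Longrightarrow> dd g = rr h \<Longrightarrow> mul g h \<in> G \<and> rr (mul g h) = rr g \<and> dd (mul g h) = dd h"
  using grp unfolding groupoid_def by blast
lemma assoc: "g\<in>G \<Longrightarrow> h\<in>G \<Longrightarrow> l\<in>G \<Longrightarrow> dd g = rr h \<Longrightarrow> dd h = rr l \<Longrightarrow> mul (mul g h) l = mul g (mul h l)"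
  using grp unfolding groupoid_def by blast
lemma unit: "g\<in>G \<Longrightarrow> mul (rr g) g = g" "g\<in>G \<Longrightarrow> mul g (dd g) = g"
  using grp unfolding groupoid_def by blast+
lemma dd_inv: "g\<in>G \<Longrightarrow> dd (ginv g) = rr g"
  by (simp add: gdom_def gran_def inv)
lemma rr_inv: "g\<in>G \<Longrightarrow> rr (ginv g) = dd g"
  by (simp add: gdom_def gran_def inv)
lemma dd_G: "g\<in>G \<Longrightarrow> dd g \<in> G"
proof -
  assume g: "g\<in>G"
  have "mul (ginv g) g \<in> G" using conjunct1[OF comp[OF inv(1)[OF g] g dd_inv[OF g]]] .
  then show ?thesis by (simp add: gdom_def)
qed
lemma rr_G: "g\<in>G \<Longrightarrow> rr g \<in> G"
proof -
  assume g: "g\<in>G"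
  have "mul g (ginv g) \<in> G" using conjunct1[OF comp[OF g inv(1)[OF g] rr_inv[OF g, symmetric]]] .
  then show ?thesis by (simp add: gran_def)
qed
lemma G0_sub: "G0 \<subseteq> G"
  unfolding gidents_def using dd_G by auto
lemma dd_G0: "g\<in>G \<Longrightarrow> dd g \<in> G0" unfolding gidents_def by auto
lemma rr_G0: "g\<in>G \<Longrightarrow> rr g \<in> G0"
  using dd_G0[of "ginv g"] by (simp add: inv dd_inv)
lemma id_rr: "e\<in>G0 \<Longrightarrow> rr e = e"
proof -
  assume "e\<in>G0" then obtain g where g: "g\<in>G" "e = dd g" unfolding gidents_def by auto
  have "rr (mul (ginv g) g) = rr (ginv g)" using comp[of "ginv g" g] g by (simp add: inv dd_inv)
  then show ?thesis using g by (simp add: rr_inv gdom_def)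
qed
lemma id_dd: "e\<in>G0 \<Longrightarrow> dd e = e"
proof -
  assume "e\<in>G0" then obtain g where g: "g\<in>G" "e = dd g" unfolding gidents_def by auto
  have "dd (mul (ginv g) g) = dd g" using comp[of "ginv g" g] g by (simp add: inv dd_inv)
  then show ?thesis using g by (simp add: gdom_def)
qed
lemma id_inv: "e\<in>G0 \<Longrightarrow> ginv e = e"
proof -
  assume e: "e\<in>G0" then have eG: "e\<in>G" using G0_sub by auto
  have "ginv e = mul (rr (ginv e)) (ginv e)" using unit(1)[of "ginv e"] eG inv by simp
  also have "\<dots> = mul e (ginv e)" using rr_inv[OF eG] id_dd[OF e] by simp
  also have "\<dots> = rr e" by (simp add: gran_def)
  finally show ?thesis using id_rr[OF e] by simp
qed

lemma E_rr: "g\<in>G \<Longrightarrow> E g = E (rr g)"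
  using act unfolding unital_action_def by (elim conjE) auto
lemma one_rr: "g\<in>G \<Longrightarrow> one g = one (rr g)"
  using act unfolding unital_action_def by (elim conjE) auto
lemma ideal: "g\<in>G \<Longrightarrow> is_ideal (E g)"
  using act unfolding unital_action_def by (elim conjE) auto
lemma one_in: "g\<in>G \<Longrightarrow> one g \<in> E g"
  using act unfolding unital_action_def by (elim conjE) auto
lemma one_l: "g\<in>G \<Longrightarrow> x\<in>E g \<Longrightarrow> one g * x = x"
  using act unfolding unital_action_def by (elim conjE) auto
lemma one_r: "g\<in>G \<Longrightarrow> x\<in>E g \<Longrightarrow> x * one g = x"
  using act unfolding unital_action_def by (elim conjE) auto
lemma b_bij: "g\<in>G \<Longrightarrow> bij_betw (\<beta> g) (E (ginv g)) (E g)"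
  using act unfolding unital_action_def by (elim conjE) auto
lemma b_add: "g\<in>G \<Longrightarrow> x\<in>E (ginv g) \<Longrightarrow> y\<in>E (ginv g) \<Longrightarrow> \<beta> g (x + y) = \<beta> g x + \<beta> g y"
  using act unfolding unital_action_def by (elim conjE) auto
lemma b_mult: "g\<in>G \<Longrightarrow> x\<in>E (ginv g) \<Longrightarrow> y\<in>E (ginv g) \<Longrightarrow> \<beta> g (x * y) = \<beta> g x * \<beta> g y"
  using act unfolding unital_action_def by (elim conjE) auto
lemma b_one: "g\<in>G \<Longrightarrow> \<beta> g (one (ginv g)) = one g"
  using act unfolding unital_action_def by (elim conjE) auto
lemma b_id: "e\<in>G0 \<Longrightarrow> x\<in>E e \<Longrightarrow> \<beta> e x = x"
  using act unfolding unital_action_def by (elim conjE) auto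
lemma b_comp: "g\<in>G \<Longrightarrow> h\<in>G \<Longrightarrow> dd g = rr h \<Longrightarrow> x\<in>E (ginv h) \<Longrightarrow> \<beta> g (\<beta> h x) = \<beta> (mul g h) x"
  using act unfolding unital_action_def by (elim conjE) blast
lemma decomp: "\<exists>!f. (\<forall>e\<in>G0. f e \<in> E e) \<and> (\<forall>e. e \<notin> G0 \<longrightarrow> f e = 0) \<and> x = (\<Sum>e\<in>G0. f e)"
  using act unfolding unital_action_def by (elim conjE) (erule spec)


lemma E_inv: "g\<in>G \<Longrightarrow> E (ginv g) = E (dd g)"
  using E_rr[OF inv(1)] rr_inv by simp
lemma one_inv: "g\<in>G \<Longrightarrow> one (ginv g) = one (dd g)"
  using one_rr[OF inv(1)] rr_inv by simp
lemma Emul_l: "g\<in>G \<Longrightarrow> x\<in>E g \<Longrightarrow> y*x \<in> E g"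
  using ideal unfolding is_ideal_def by blast
lemma Emul_r: "g\<in>G \<Longrightarrow> x\<in>E g \<Longrightarrow> x*y \<in> E g"
  using ideal unfolding is_ideal_def by blast
lemma E0: "g\<in>G \<Longrightarrow> 0 \<in> E g"
  using ideal unfolding is_ideal_def by blast
lemma Eadd: "g\<in>G \<Longrightarrow> x\<in>E g \<Longrightarrow> y\<in>E g \<Longrightarrow> x+y \<in> E g"
  using ideal unfolding is_ideal_def by blast
lemma Esum: assumes "g\<in>G" "finite I" "\<forall>i\<in>I. f i \<in> E g" shows "sum f I \<in> E g"
  using assms(2,3) by (induction I rule: finite_induct) (auto intro: E0[OF assms(1)] Eadd[OF assms(1)])
lemma finG0: "finite G0" using finite_subset[OF G0_sub fin] .
lemma G0G: "e\<in>G0 \<Longrightarrow> e\<in>G" using G0_sub by auto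

lemma orth:
  assumes e: "e\<in>G0" and e': "e'\<in>G0" and ne: "e\<noteq>e'" and x: "x\<in>E e" and y: "y\<in>E e'"
  shows "x*y = 0"
proof -
  define z where "z = x*y"
  have z1: "z\<in>E e" unfolding z_def using Emul_r[OF G0G[OF e] x] .
  have z2: "z\<in>E e'" unfolding z_def using Emul_l[OF G0G[OF e'] y] .
  define f1 where "f1 = (\<lambda>k. if k = e then z else 0)"
  define f2 where "f2 = (\<lambda>k. if k = e' then z else 0)"
  have P1: "(\<forall>k\<in>G0. f1 k \<in> E k) \<and> (\<forall>k. k \<notin> G0 \<longrightarrow> f1 k = 0) \<and> z = sum f1 G0"
    unfolding f1_def using z1 e E0 G0G finG0 by (auto simp: sum.delta)
  have P2: "(\<forall>k\<in>G0. f2 k \<in> E k) \<and> (\<forall>k. k \<notin> G0 \<longrightarrow> f2 k = 0) \<and> z = sum f2 G0"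
    unfolding f2_def using z2 e' E0 G0G finG0 by (auto simp: sum.delta)
  have "f1 = f2" using decomp[of z] P1 P2 by blast
  then have "f1 e = f2 e" by simp
  then show ?thesis using ne unfolding f1_def f2_def z_def by simp
qed

lemma sum_one: "(\<Sum>e\<in>G0. one e) = 1"
proof -
  obtain f where f: "\<forall>e\<in>G0. f e \<in> E e" "(1::'r) = sum f G0" using decomp[of 1] by blast
  have "one e = f e" if e: "e\<in>G0" for e
  proof -
    have "one e = one e * sum f G0" using f(2) by simp
    also have "\<dots> = (\<Sum>k\<in>G0. one e * f k)" by (simp add: sum_distrib_left)
    also have "\<dots> = (\<Sum>k\<in>G0. if k = e then f e else 0)"
    proof (rule sum.cong)
      fix k assume k: "k\<in>G0"
      show "one e * f k = (if k = e then f e else 0)"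
        using orth[OF e k _ one_in[OF G0G[OF e]] f(1)[rule_format, OF k]] one_l[OF G0G[OF e] f(1)[rule_format, OF e]]
        by auto
    qed simp
    also have "\<dots> = f e" using e finG0 by (simp add: sum.delta')
    finally show ?thesis .
  qed
  then have "sum one G0 = sum f G0" by (rule sum.cong[OF refl])
  then show ?thesis using f(2) by simp
qed

lemma central0:
  assumes e: "e\<in>G0" shows "one e * x = x * one e"
proof -
  have eG: "e\<in>G" using G0G[OF e] .
  have "one e * x = one e * x * (\<Sum>k\<in>G0. one k)" by (simp add: sum_one)
  also have "\<dots> = (\<Sum>k\<in>G0. one e * x * one k)" by (simp add: sum_distrib_left)
  also have "\<dots> = (\<Sum>k\<in>G0. if k = e then one e * x * one e else 0)"
  proof (rule sum.cong)
    fix k assume k: "k\<in>G0"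
    show "one e * x * one k = (if k = e then one e * x * one e else 0)"
      using orth[OF e k _ Emul_r[OF eG one_in[OF eG]] one_in[OF G0G[OF k]]] by auto
  qed simp
  also have "\<dots> = one e * x * one e" using e finG0 by (simp add: sum.delta')
  also have "\<dots> = (\<Sum>k\<in>G0. if k = e then one k * (x * one e) else 0)" using e finG0 by (simp add: sum.delta' mult.assoc)
  also have "\<dots> = (\<Sum>k\<in>G0. one k * (x * one e))"
  proof (rule sum.cong)
    fix k assume k: "k\<in>G0"
    show "(if k = e then one k * (x * one e) else 0) = one k * (x * one e)"
      using orth[OF k e _ one_in[OF G0G[OF k]] Emul_l[OF eG one_in[OF eG]]] by auto
  qed simp
  also have "\<dots> = (\<Sum>k\<in>G0. one k) * (x * one e)" by (simp add: sum_distrib_right)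
  also have "\<dots> = x * one e" by (simp add: sum_one)
  finally show ?thesis .
qed

lemma central: "g\<in>G \<Longrightarrow> one g * x = x * one g"
proof -
  assume g: "g\<in>G"
  have "one g = one (rr g)" by (rule one_rr[OF g])
  then show ?thesis using central0[OF rr_G0[OF g], of x] by metis
qed

lemma idem: "g\<in>G \<Longrightarrow> one g * one g = one g"
  by (rule one_l[OF _ one_in])

lemma b0: "g\<in>G \<Longrightarrow> \<beta> g 0 = 0"
proof -
  assume g: "g\<in>G"
  have z: "(0::'r) \<in> E (ginv g)" using E0[OF inv(1)[OF g]] .
  have "\<beta> g 0 = \<beta> g 0 + \<beta> g 0" using b_add[OF g z z] by simp
  then show ?thesis by simp
qed

lemma b_mem: "g\<in>G \<Longrightarrow> x \<in> E (ginv g) \<Longrightarrow> \<beta> g x \<in> E g"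
  by (rule bij_betw_apply[OF b_bij])

lemma b_sum: assumes g: "g\<in>G" and "finite I" "\<forall>i\<in>I. f i \<in> E (ginv g)"
  shows "\<beta> g (sum f I) = (\<Sum>i\<in>I. \<beta> g (f i))"
  using assms(2,3)
proof (induction I rule: finite_induct)
  case empty then show ?case by (simp add: b0[OF g])
next
  case (insert a I)
  have "sum f I \<in> E (ginv g)" using insert Esum[OF inv(1)[OF g]] by blast
  then show ?case using insert b_add[OF g] by simp
qed

lemma mult_one: "g\<in>G \<Longrightarrow> x\<in>E g \<Longrightarrow> e\<in>G0 \<Longrightarrow> x * one e = (if rr g = e then x else 0)"
proof -
  assume g: "g\<in>G" and x: "x\<in>E g" and e: "e\<in>G0"
  have x': "x \<in> E (rr g)" using x E_rr[OF g] by simp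
  show ?thesis
  proof (cases "rr g = e")
    case True
    have "x * one e = x * one g" by (simp only: one_rr[OF g] True)
    also have "\<dots> = x" by (rule one_r[OF g x])
    finally show ?thesis using True by simp
  next
    case False
    have "x * one e = 0" by (rule orth[OF rr_G0[OF g] e False x' one_in[OF G0G[OF e]]])
    then show ?thesis using False by simp
  qed
qed


lemma uu: assumes g: "g\<in>G" shows "(a * one (ginv g)) * (b * one (ginv g)) = a * b * one (ginv g)"
proof -
  have gi: "ginv g \<in> G" using inv(1)[OF g] .
  have "(a * one (ginv g)) * (b * one (ginv g)) = a * (one (ginv g) * b) * one (ginv g)" by (simp add: mult.assoc)
  also have "\<dots> = a * (b * one (ginv g)) * one (ginv g)" using central[OF gi, of b] by simp
  also have "\<dots> = a * b * (one (ginv g) * one (ginv g))" by (simp add: mult.assoc)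
  also have "\<dots> = a * b * one (ginv g)" using idem[OF gi] by simp
  finally show ?thesis .
qed

lemma u_in: "g\<in>G \<Longrightarrow> x * one (ginv g) \<in> E (ginv g)"
  by (rule Emul_l[OF inv(1) one_in[OF inv(1)]])

definition tr :: "'r \<Rightarrow> 'r" where "tr x = (\<Sum>g\<in>G. \<beta> g (x * one (ginv g)))"

lemma bmem': "g\<in>G \<Longrightarrow> \<beta> g (x * one (ginv g)) \<in> E g"
  by (rule b_mem[OF _ u_in])

lemma tr_mult: assumes h: "h\<in>G" and e: "e\<in>G0"
  shows "tr x * one e = (\<Sum>g\<in>{g\<in>G. rr g = e}. \<beta> g (x * one (ginv g)))"
proof -
  have "tr x * one e = (\<Sum>g\<in>G. \<beta> g (x * one (ginv g)) * one e)" unfolding tr_def by (simp add: sum_distrib_right)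
  also have "\<dots> = (\<Sum>g\<in>G. if rr g = e then \<beta> g (x * one (ginv g)) else 0)"
    by (rule sum.cong[OF refl]) (rule mult_one[OF _ bmem' e])
  also have "\<dots> = (\<Sum>g\<in>{g\<in>G. rr g = e}. \<beta> g (x * one (ginv g)))" using fin by (simp add: sum.inter_filter)
  finally show ?thesis .
qed

lemma tr_inv: "tr x \<in> invariants G ginv one \<beta>"
  unfolding invariants_def
proof (intro CollectI ballI)
  fix h assume h: "h\<in>G"
  define A where "A = {g\<in>G. rr g = dd h}"
  define B where "B = {g\<in>G. rr g = rr h}"
  have "tr x * one (ginv h) = tr x * one (dd h)" using one_inv[OF h] by simp
  also have "\<dots> = (\<Sum>g\<in>A. \<beta> g (x * one (ginv g)))" unfolding A_def by (rule tr_mult[OF h dd_G0[OF h]])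
  finally have 1: "tr x * one (ginv h) = (\<Sum>g\<in>A. \<beta> g (x * one (ginv g)))" .
  have finA: "finite A" unfolding A_def using fin by simp
  have "\<beta> h (tr x * one (ginv h)) = (\<Sum>g\<in>A. \<beta> h (\<beta> g (x * one (ginv g))))"
    unfolding 1
  proof (rule b_sum[OF h finA], intro ballI)
    fix g assume g: "g\<in>A"
    then have gG: "g\<in>G" and r: "rr g = dd h" unfolding A_def by auto
    have "E (ginv h) = E g" using E_inv[OF h] E_rr[OF gG] r by simp
    then show "\<beta> g (x * one (ginv g)) \<in> E (ginv h)" using bmem'[OF gG] by simp
  qed
  also have "\<dots> = (\<Sum>g\<in>A. \<beta> (mul h g) (x * one (ginv g)))"
  proof (rule sum.cong[OF refl])
    fix g assume g: "g\<in>A"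
    then have gG: "g\<in>G" and r: "rr g = dd h" unfolding A_def by auto
    show "\<beta> h (\<beta> g (x * one (ginv g))) = \<beta> (mul h g) (x * one (ginv g))"
      by (rule b_comp[OF h gG r[symmetric] u_in[OF gG]])
  qed
  also have "\<dots> = (\<Sum>g\<in>B. \<beta> g (x * one (ginv g)))"
  proof (rule sum.reindex_bij_witness[where i = "mul (ginv h)" and j = "mul h"])
    fix a assume a: "a\<in>A"
    then have aG: "a\<in>G" and r: "rr a = dd h" unfolding A_def by auto
    have c: "mul h a \<in> G \<and> rr (mul h a) = rr h \<and> dd (mul h a) = dd a" using comp[OF h aG r[symmetric]] .
    show "mul h a \<in> B" using c unfolding B_def by simp
    have "mul (ginv h) (mul h a) = mul (mul (ginv h) h) a"
      using assoc[OF inv(1)[OF h] h aG dd_inv[OF h] r[symmetric]] by simp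
    also have "\<dots> = mul (dd h) a" by (simp add: gdom_def)
    also have "\<dots> = a" using unit(1)[OF aG] r by simp
    finally show "mul (ginv h) (mul h a) = a" .
    have "one (ginv (mul h a)) = one (ginv a)" using one_inv[OF aG] one_inv[of "mul h a"] c by simp
    then show "\<beta> (mul h a) (x * one (ginv (mul h a))) = \<beta> (mul h a) (x * one (ginv a))" by simp
  next
    fix b assume b: "b\<in>B"
    then have bG: "b\<in>G" and r: "rr b = rr h" unfolding B_def by auto
    have r': "dd (ginv h) = rr b" using dd_inv[OF h] r by simp
    have c: "mul (ginv h) b \<in> G \<and> rr (mul (ginv h) b) = rr (ginv h) \<and> dd (mul (ginv h) b) = dd b"
      using comp[OF inv(1)[OF h] bG r'] .
    show "mul (ginv h) b \<in> A" using c rr_inv[OF h] unfolding A_def by simp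
    have "mul h (mul (ginv h) b) = mul (mul h (ginv h)) b"
      using assoc[OF h inv(1)[OF h] bG rr_inv[OF h, symmetric] r'] by simp
    also have "\<dots> = mul (rr h) b" by (simp add: gran_def)
    also have "\<dots> = b" using unit(1)[OF bG] r by simp
    finally show "mul h (mul (ginv h) b) = b" .
  qed
  also have "\<dots> = tr x * one (rr h)" unfolding B_def by (rule tr_mult[OF h rr_G0[OF h], symmetric])
  also have "\<dots> = tr x * one h" using one_rr[OF h] by simp
  finally show "\<beta> h (tr x * one (ginv h)) = tr x * one h" .
qed

lemma sumG0: "(\<Sum>g\<in>G. if g\<in>G0 then F g else 0) = (\<Sum>e\<in>G0. F e)"
proof -
  have "{g\<in>G. g\<in>G0} = G0" using G0_sub by auto
  then show ?thesis using fin by (simp add: sum.inter_filter[symmetric])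
qed

lemma one_inv0: "e\<in>G0 \<Longrightarrow> one (ginv e) = one e"
  using id_inv by simp

lemma b_id': "e\<in>G0 \<Longrightarrow> \<beta> e (r * one (ginv e)) = r * one e"
  using b_id[OF _ Emul_l[OF G0G one_in[OF G0G]]] id_inv by simp

lemma one_sand: "g\<in>G \<Longrightarrow> one g * (r * one g) = r * one g"
  by (metis central idem mult.assoc)

lemma TB: assumes t: "t \<in> invariants G ginv one \<beta>" and g: "g\<in>G"
  shows "\<beta> g (t * y * one (ginv g)) = t * \<beta> g (y * one (ginv g))"
proof -
  have tt: "\<beta> g (t * one (ginv g)) = t * one g" using t g unfolding invariants_def by blast
  have "\<beta> g (t * y * one (ginv g)) = \<beta> g ((t * one (ginv g)) * (y * one (ginv g)))" using uu[OF g] by simp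
  also have "\<dots> = t * one g * \<beta> g (y * one (ginv g))" using b_mult[OF g u_in[OF g] u_in[OF g]] tt by simp
  also have "\<dots> = t * \<beta> g (y * one (ginv g))" using one_l[OF g bmem'[OF g]] by (simp add: mult.assoc)
  finally show ?thesis .
qed

end

locale GB = GA sc G mul ginv E one \<beta>
  for sc :: "'k::comm_ring_1 \<Rightarrow> 'r::ring_1 \<Rightarrow> 'r" and G :: "'g set" and mul ginv
    and E :: "'g \<Rightarrow> 'r set" and one :: "'g \<Rightarrow> 'r" and \<beta> +
  fixes m :: nat and xs ys :: "nat \<Rightarrow> 'r::ring_1"
  assumes gal: "\<forall>g\<in>G. (\<Sum>i<m. xs i * \<beta> g (ys i * one (ginv g))) = (if g \<in> G0 then one g else 0)"
begin

lemma galg: "g\<in>G \<Longrightarrow> (\<Sum>i<m. xs i * \<beta> g (ys i * one (ginv g))) = (if g \<in> G0 then one g else 0)"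
  using gal by blast

lemma P1: "(\<Sum>i<m. xs i * tr (ys i)) = 1"
proof -
  have "(\<Sum>i<m. xs i * tr (ys i)) = (\<Sum>i<m. \<Sum>g\<in>G. xs i * \<beta> g (ys i * one (ginv g)))"
    by (simp add: tr_def sum_distrib_left)
  also have "\<dots> = (\<Sum>g\<in>G. \<Sum>i<m. xs i * \<beta> g (ys i * one (ginv g)))" by (rule sum.swap)
  also have "\<dots> = (\<Sum>g\<in>G. if g\<in>G0 then one g else 0)" by (rule sum.cong[OF refl]) (rule galg)
  also have "\<dots> = 1" by (simp add: sumG0 sum_one)
  finally show ?thesis .
qed

lemma P2: "(\<Sum>i<m. xs i * tr (ys i * r)) = r"
proof -
  have "(\<Sum>i<m. xs i * tr (ys i * r)) = (\<Sum>i<m. \<Sum>g\<in>G. xs i * \<beta> g (ys i * r * one (ginv g)))"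
    by (simp add: tr_def sum_distrib_left)
  also have "\<dots> = (\<Sum>g\<in>G. \<Sum>i<m. xs i * \<beta> g (ys i * r * one (ginv g)))" by (rule sum.swap)
  also have "\<dots> = (\<Sum>g\<in>G. (\<Sum>i<m. xs i * \<beta> g (ys i * one (ginv g))) * \<beta> g (r * one (ginv g)))"
  proof (rule sum.cong[OF refl])
    fix g assume g: "g\<in>G"
    have "\<beta> g (ys i * r * one (ginv g)) = \<beta> g (ys i * one (ginv g)) * \<beta> g (r * one (ginv g))" for i
      by (simp only: uu[OF g, of "ys i" r, symmetric] b_mult[OF g u_in[OF g] u_in[OF g]])
    then show "(\<Sum>i<m. xs i * \<beta> g (ys i * r * one (ginv g))) = (\<Sum>i<m. xs i * \<beta> g (ys i * one (ginv g))) * \<beta> g (r * one (ginv g))"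
      by (simp add: sum_distrib_right mult.assoc)
  qed
  also have "\<dots> = (\<Sum>g\<in>G. if g\<in>G0 then one g * \<beta> g (r * one (ginv g)) else 0)"
    by (rule sum.cong[OF refl]) (simp add: galg)
  also have "\<dots> = (\<Sum>e\<in>G0. one e * \<beta> e (r * one (ginv e)))" by (rule sumG0)
  also have "\<dots> = (\<Sum>e\<in>G0. r * one e)"
    by (rule sum.cong[OF refl]) (simp add: b_id' one_sand G0G)
  also have "\<dots> = r" by (simp add: sum_distrib_left[symmetric] sum_one)
  finally show ?thesis .
qed

lemma Q: assumes g: "g\<in>G"
  shows "(\<Sum>i<m. \<beta> g (xs i * one (ginv g)) * ys i) = (if g\<in>G0 then one g else 0)"
proof -
  define k where "k = ginv g"
  have kG: "k\<in>G" unfolding k_def using inv(1)[OF g] .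
  have kk: "ginv k = g" unfolding k_def using inv(2)[OF g] .
  define v where "v i = \<beta> k (ys i * one g)" for i
  have vE: "v i \<in> E (ginv g)" for i
    unfolding v_def k_def[symmetric] using b_mem[OF kG, of "ys i * one g"] Emul_l[OF g one_in[OF g]] kk by simp
  have gk: "g\<in>G0 \<longleftrightarrow> k\<in>G0" unfolding k_def using id_inv inv(2)[OF g] by metis
  have galk: "(\<Sum>i<m. xs i * v i) = (if k\<in>G0 then one k else 0)"
    unfolding v_def using galg[OF kG] kk by simp
  have xv: "xs i * v i = (xs i * one (ginv g)) * v i" for i
    using one_l[OF inv(1)[OF g] vE[of i]] by (simp add: mult.assoc)
  have bv: "\<beta> g (v i) = ys i * one g" for i
  proof -
    have c: "dd g = rr k" unfolding k_def using rr_inv[OF g] by simp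
    have yE: "ys i * one g \<in> E (ginv k)" using kk Emul_l[OF g one_in[OF g]] by simp
    have "\<beta> g (v i) = \<beta> (mul g k) (ys i * one g)" unfolding v_def by (rule b_comp[OF g kG c yE])
    also have "mul g k = rr g" unfolding k_def by (simp add: gran_def)
    also have "\<beta> (rr g) (ys i * one g) = ys i * one g"
      using b_id[OF rr_G0[OF g]] Emul_l[OF g one_in[OF g]] E_rr[OF g] by simp
    finally show ?thesis .
  qed
  have "\<beta> g (\<Sum>i<m. xs i * v i) = (\<Sum>i<m. \<beta> g (xs i * v i))"
    by (rule b_sum[OF g]) (auto intro: Emul_l[OF inv(1)[OF g] vE])
  also have "\<dots> = (\<Sum>i<m. \<beta> g (xs i * one (ginv g)) * (ys i * one g))"
    by (rule sum.cong[OF refl]) (simp add: xv b_mult[OF g u_in[OF g] vE] bv)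
  also have "\<dots> = (\<Sum>i<m. \<beta> g (xs i * one (ginv g)) * ys i)"
  proof (rule sum.cong[OF refl])
    fix i
    have "\<beta> g (xs i * one (ginv g)) * (ys i * one g) = \<beta> g (xs i * one (ginv g)) * one g * ys i"
      using central[OF g, of "ys i"] by (simp add: mult.assoc)
    also have "\<dots> = \<beta> g (xs i * one (ginv g)) * ys i" using one_r[OF g bmem'[OF g]] by simp
    finally show "\<beta> g (xs i * one (ginv g)) * (ys i * one g) = \<beta> g (xs i * one (ginv g)) * ys i" .
  qed
  finally have 1: "(\<Sum>i<m. \<beta> g (xs i * one (ginv g)) * ys i) = \<beta> g (if k\<in>G0 then one k else 0)"
    using galk by simp
  show ?thesis
  proof (cases "g\<in>G0")
    case True then show ?thesis using 1 gk b_one[OF g] unfolding k_def by simp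
  next
    case False then show ?thesis using 1 gk b0[OF g] by simp
  qed
qed

lemma P3: "(\<Sum>i<m. tr (w * xs i) * ys i) = w"
proof -
  have "(\<Sum>i<m. tr (w * xs i) * ys i) = (\<Sum>i<m. \<Sum>g\<in>G. \<beta> g (w * xs i * one (ginv g)) * ys i)"
    by (simp add: tr_def sum_distrib_right)
  also have "\<dots> = (\<Sum>g\<in>G. \<Sum>i<m. \<beta> g (w * xs i * one (ginv g)) * ys i)" by (rule sum.swap)
  also have "\<dots> = (\<Sum>g\<in>G. \<beta> g (w * one (ginv g)) * (\<Sum>i<m. \<beta> g (xs i * one (ginv g)) * ys i))"
  proof (rule sum.cong[OF refl])
    fix g assume g: "g\<in>G"
    have "\<beta> g (w * xs i * one (ginv g)) = \<beta> g (w * one (ginv g)) * \<beta> g (xs i * one (ginv g))" for i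
      by (simp only: uu[OF g, of w "xs i", symmetric] b_mult[OF g u_in[OF g] u_in[OF g]])
    then show "(\<Sum>i<m. \<beta> g (w * xs i * one (ginv g)) * ys i) = \<beta> g (w * one (ginv g)) * (\<Sum>i<m. \<beta> g (xs i * one (ginv g)) * ys i)"
      by (simp add: sum_distrib_left mult.assoc)
  qed
  also have "\<dots> = (\<Sum>g\<in>G. if g\<in>G0 then \<beta> g (w * one (ginv g)) * one g else 0)"
    by (rule sum.cong[OF refl]) (simp add: Q)
  also have "\<dots> = (\<Sum>e\<in>G0. \<beta> e (w * one (ginv e)) * one e)" by (rule sumG0)
  also have "\<dots> = (\<Sum>e\<in>G0. w * one e)"
    by (rule sum.cong[OF refl]) (simp add: b_id' idem G0G mult.assoc)
  also have "\<dots> = w" by (simp add: sum_distrib_left[symmetric] sum_one)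
  finally show ?thesis .
qed

lemma ctr: "c \<in> commutant UNIV (invariants G ginv one \<beta>) \<Longrightarrow> c * tr x = tr x * c"
  using tr_inv unfolding commutant_def by blast

lemma ctr': "c \<in> commutant UNIV (invariants G ginv one \<beta>) \<Longrightarrow> c * (tr x * y) = tr x * (c * y)"
  using ctr by (metis mult.assoc)

lemma I1: assumes g: "g\<in>G"
  shows "(\<Sum>i<m. tr (w * xs i) * \<beta> g (ys i * one (ginv g))) = \<beta> g (w * one (ginv g))"
proof -
  have "(\<Sum>i<m. tr (w * xs i) * \<beta> g (ys i * one (ginv g))) = (\<Sum>i<m. \<beta> g (tr (w * xs i) * ys i * one (ginv g)))"
    by (rule sum.cong[OF refl]) (simp add: TB[OF tr_inv g])
  also have "\<dots> = \<beta> g (\<Sum>i<m. tr (w * xs i) * ys i * one (ginv g))"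
    by (rule b_sum[OF g, symmetric]) (auto intro: u_in[OF g])
  also have "\<dots> = \<beta> g ((\<Sum>i<m. tr (w * xs i) * ys i) * one (ginv g))" by (simp add: sum_distrib_right)
  also have "\<dots> = \<beta> g (w * one (ginv g))" by (simp add: P3)
  finally show ?thesis .
qed

lemma J_elem: assumes c: "c \<in> commutant UNIV (invariants G ginv one \<beta>)" and g: "g\<in>G"
  shows "(\<Sum>i<m. xs i * c * \<beta> g (ys i * one (ginv g))) \<in> Jset ginv E one \<beta> g"
proof -
  define a where "a = (\<Sum>i<m. xs i * c * \<beta> g (ys i * one (ginv g)))"
  have aE: "a \<in> E g" unfolding a_def by (rule Esum[OF g]) (auto intro: Emul_l[OF g bmem'[OF g]])
  have "a * \<beta> g (z * one (ginv g)) = z * a" for z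
  proof -
    have "z * a = (\<Sum>i<m. (z * xs i) * c * \<beta> g (ys i * one (ginv g)))"
      unfolding a_def by (simp add: sum_distrib_left mult.assoc)
    also have "\<dots> = (\<Sum>i<m. (\<Sum>j<m. xs j * tr (ys j * (z * xs i))) * c * \<beta> g (ys i * one (ginv g)))"
      by (simp add: P2)
    also have "\<dots> = (\<Sum>i<m. \<Sum>j<m. xs j * c * (tr (ys j * z * xs i) * \<beta> g (ys i * one (ginv g))))"
      by (simp add: sum_distrib_right mult.assoc ctr'[OF c])
    also have "\<dots> = (\<Sum>j<m. \<Sum>i<m. xs j * c * (tr (ys j * z * xs i) * \<beta> g (ys i * one (ginv g))))"
      by (rule sum.swap)
    also have "\<dots> = (\<Sum>j<m. xs j * c * (\<Sum>i<m. tr (ys j * z * xs i) * \<beta> g (ys i * one (ginv g))))"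
      by (simp add: sum_distrib_left)
    also have "\<dots> = (\<Sum>j<m. xs j * c * \<beta> g (ys j * z * one (ginv g)))"
      by (simp add: I1[OF g])
    also have "\<dots> = (\<Sum>j<m. xs j * c * \<beta> g (ys j * one (ginv g)) * \<beta> g (z * one (ginv g)))"
    proof (rule sum.cong[OF refl])
      fix j
      have "\<beta> g (ys j * z * one (ginv g)) = \<beta> g (ys j * one (ginv g)) * \<beta> g (z * one (ginv g))"
        by (simp only: uu[OF g, of "ys j" z, symmetric] b_mult[OF g u_in[OF g] u_in[OF g]])
      then show "xs j * c * \<beta> g (ys j * z * one (ginv g)) = xs j * c * \<beta> g (ys j * one (ginv g)) * \<beta> g (z * one (ginv g))"
        by (simp add: mult.assoc)
    qed
    also have "\<dots> = a * \<beta> g (z * one (ginv g))" unfolding a_def by (simp add: sum_distrib_right)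
    finally show ?thesis by simp
  qed
  then show ?thesis using aE unfolding Jset_def a_def by blast
qed

lemma sum_a: assumes c: "c \<in> commutant UNIV (invariants G ginv one \<beta>)"
  shows "(\<Sum>g\<in>G. \<Sum>i<m. xs i * c * \<beta> g (ys i * one (ginv g))) = c"
proof -
  have "(\<Sum>g\<in>G. \<Sum>i<m. xs i * c * \<beta> g (ys i * one (ginv g))) = (\<Sum>i<m. \<Sum>g\<in>G. xs i * c * \<beta> g (ys i * one (ginv g)))"
    by (rule sum.swap)
  also have "\<dots> = (\<Sum>i<m. xs i * c * tr (ys i))" by (simp add: tr_def sum_distrib_left)
  also have "\<dots> = (\<Sum>i<m. xs i * tr (ys i)) * c" by (simp add: sum_distrib_right mult.assoc ctr[OF c])
  also have "\<dots> = c" by (simp add: P1)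
  finally show ?thesis .
qed

lemma rev_dir: assumes a: "\<forall>g\<in>G. a g \<in> Jset ginv E one \<beta> g"
  shows "(\<Sum>g\<in>G. a g) \<in> commutant UNIV (invariants G ginv one \<beta>)"
  unfolding commutant_def
proof (intro CollectI conjI UNIV_I ballI)
  fix s assume s: "s \<in> invariants G ginv one \<beta>"
  have "a g * s = s * a g" if g: "g\<in>G" for g
  proof -
    have aE: "a g \<in> E g" and aJ: "\<And>x. a g * \<beta> g (x * one (ginv g)) = x * a g"
      using a g unfolding Jset_def by auto
    have "s * a g = a g * \<beta> g (s * one (ginv g))" using aJ by simp
    also have "\<dots> = a g * (s * one g)" using s g unfolding invariants_def by simp
    also have "\<dots> = a g * one g * s" using central[OF g, of s] by (simp add: mult.assoc)
    also have "\<dots> = a g * s" using one_r[OF g aE] by simp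
    finally show ?thesis by simp
  qed
  then show "(\<Sum>g\<in>G. a g) * s = s * (\<Sum>g\<in>G. a g)" by (simp add: sum_distrib_left sum_distrib_right)
qed

lemma D: assumes aJ: "a \<in> Jset ginv E one \<beta> g" and g: "g\<in>G" and h: "h\<in>G"
  shows "a * (\<Sum>i<m. \<beta> g (xs i * one (ginv g)) * \<beta> h (ys i * one (ginv h))) = (if g = h then a else 0)"
proof (cases "rr g = rr h")
  case False
  have aE: "a \<in> E g" using aJ unfolding Jset_def by auto
  have "a * (\<beta> g (xs i * one (ginv g)) * \<beta> h (ys i * one (ginv h))) = 0" for i
  proof -
    have 1: "a * \<beta> g (xs i * one (ginv g)) \<in> E (rr g)" using Emul_r[OF g aE] E_rr[OF g] by simp
    have 2: "\<beta> h (ys i * one (ginv h)) \<in> E (rr h)" using bmem'[OF h] E_rr[OF h] by simp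
    show ?thesis using orth[OF rr_G0[OF g] rr_G0[OF h] False 1 2] by (simp add: mult.assoc)
  qed
  moreover have "g \<noteq> h" using False by auto
  ultimately show ?thesis by (simp add: sum_distrib_left)
next
  case True
  have aE: "a \<in> E g" using aJ unfolding Jset_def by auto
  define k where "k = mul (ginv g) h"
  have c1: "dd (ginv g) = rr h" using dd_inv[OF g] True by simp
  have kc: "k \<in> G \<and> rr k = rr (ginv g) \<and> dd k = dd h" unfolding k_def by (rule comp[OF inv(1)[OF g] h c1])
  then have kG: "k\<in>G" and rk: "rr k = dd g" and dk: "dd k = dd h" using rr_inv[OF g] by auto
  have gk: "mul g k = h"
  proof -
    have "mul g k = mul (mul g (ginv g)) h" unfolding k_def
      using assoc[OF g inv(1)[OF g] h rr_inv[OF g, symmetric] c1] by simp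
    also have "\<dots> = mul (rr h) h" using True by (simp add: gran_def)
    also have "\<dots> = h" by (rule unit(1)[OF h])
    finally show ?thesis .
  qed
  have uk: "one (ginv h) = one (ginv k)" using one_inv[OF h] one_inv[OF kG] dk by simp
  have Ek: "E (ginv k) = E (ginv h)" using E_inv[OF h] E_inv[OF kG] dk by simp
  define v where "v i = \<beta> k (ys i * one (ginv k))" for i
  have vE: "v i \<in> E (ginv g)" for i
    unfolding v_def using bmem'[OF kG] E_rr[OF kG] rk E_inv[OF g] by simp
  have bh: "\<beta> h (ys i * one (ginv h)) = \<beta> g (v i)" for i
  proof -
    have "\<beta> g (v i) = \<beta> (mul g k) (ys i * one (ginv k))" unfolding v_def
      by (rule b_comp[OF g kG rk[symmetric] u_in[OF kG]])
    then show ?thesis using gk uk by simp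
  qed
  have "(\<Sum>i<m. \<beta> g (xs i * one (ginv g)) * \<beta> h (ys i * one (ginv h)))
        = (\<Sum>i<m. \<beta> g (xs i * one (ginv g) * v i))"
    by (rule sum.cong[OF refl]) (simp add: bh b_mult[OF g u_in[OF g] vE])
  also have "\<dots> = \<beta> g (\<Sum>i<m. xs i * one (ginv g) * v i)"
    by (rule b_sum[OF g, symmetric]) (auto intro: Emul_r[OF inv(1)[OF g] u_in[OF g]])
  also have "(\<Sum>i<m. xs i * one (ginv g) * v i) = (\<Sum>i<m. xs i * v i)"
    by (rule sum.cong[OF refl]) (simp add: mult.assoc one_l[OF inv(1)[OF g] vE])
  also have "\<dots> = (if k\<in>G0 then one k else 0)" unfolding v_def by (rule galg[OF kG])
  finally have S: "(\<Sum>i<m. \<beta> g (xs i * one (ginv g)) * \<beta> h (ys i * one (ginv h))) = \<beta> g (if k\<in>G0 then one k else 0)" .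
  show ?thesis
  proof (cases "g = h")
    case True
    have "k = dd g" unfolding k_def True by (simp add: gdom_def)
    then have "k \<in> G0" "one k = one (ginv g)" using dd_G0[OF g] one_inv[OF g] by auto
    then show ?thesis using S b_one[OF g] one_r[OF g aE] True by simp
  next
    case False
    have "k \<notin> G0"
    proof
      assume k0: "k\<in>G0"
      then have "k = dd g" using id_rr[OF k0] rk by simp
      then have "mul g k = g" using unit(2)[OF g] by simp
      then show False using gk False by simp
    qed
    then show ?thesis using S b0[OF g] False by simp
  qed
qed

lemma direct: assumes a: "\<forall>g\<in>G. a g \<in> Jset ginv E one \<beta> g" and s: "(\<Sum>g\<in>G. a g) = 0" and h: "h\<in>G"
  shows "a h = 0"
proof -
  have "0 = (\<Sum>i<m. xs i * (\<Sum>g\<in>G. a g) * \<beta> h (ys i * one (ginv h)))" using s by simp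
  also have "\<dots> = (\<Sum>i<m. \<Sum>g\<in>G. xs i * a g * \<beta> h (ys i * one (ginv h)))"
    by (simp add: sum_distrib_left sum_distrib_right)
  also have "\<dots> = (\<Sum>g\<in>G. \<Sum>i<m. xs i * a g * \<beta> h (ys i * one (ginv h)))" by (rule sum.swap)
  also have "\<dots> = (\<Sum>g\<in>G. a g * (\<Sum>i<m. \<beta> g (xs i * one (ginv g)) * \<beta> h (ys i * one (ginv h))))"
  proof (rule sum.cong[OF refl])
    fix g assume g: "g\<in>G"
    have J: "xs i * a g = a g * \<beta> g (xs i * one (ginv g))" for i
      using a g unfolding Jset_def by auto
    show "(\<Sum>i<m. xs i * a g * \<beta> h (ys i * one (ginv h))) = a g * (\<Sum>i<m. \<beta> g (xs i * one (ginv g)) * \<beta> h (ys i * one (ginv h)))"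
      by (simp add: J sum_distrib_left mult.assoc)
  qed
  also have "\<dots> = (\<Sum>g\<in>G. if g = h then a h else 0)"
    by (rule sum.cong[OF refl]) (use a h D in auto)
  also have "\<dots> = a h" using h fin by (simp add: sum.delta')
  finally show ?thesis by simp
qed
end

theorem lemma3p1:
  fixes sc :: "'k::comm_ring_1 \<Rightarrow> 'r::ring_1 \<Rightarrow> 'r"
    and G :: "'g set" and mul :: "'g \<Rightarrow> 'g \<Rightarrow> 'g" and ginv :: "'g \<Rightarrow> 'g"
    and E :: "'g \<Rightarrow> 'r set" and one :: "'g \<Rightarrow> 'r" and \<beta> :: "'g \<Rightarrow> 'r \<Rightarrow> 'r"
  assumes "is_algebra sc"
    and "groupoid G mul ginv" and "finite G"
    and "unital_action sc G mul ginv E one \<beta>"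
    and "galois_ext G mul ginv one \<beta>"
  shows "commutant UNIV (invariants G ginv one \<beta>)
           = {\<Sum>g\<in>G. a g | a. \<forall>g\<in>G. a g \<in> Jset ginv E one \<beta> g}
      \<and> (\<forall>a. (\<forall>g\<in>G. a g \<in> Jset ginv E one \<beta> g) \<and> (\<Sum>g\<in>G. a g) = 0 \<longrightarrow> (\<forall>g\<in>G. a g = 0))"
proof -
  interpret GA sc G mul ginv E one \<beta>
    by (unfold_locales) (use assms in auto)
  obtain m :: nat and xs ys :: "nat \<Rightarrow> 'r" where gal: "\<forall>g\<in>G. (\<Sum>i<m. xs i * \<beta> g (ys i * one (ginv g))) = (if g \<in> gidents G mul ginv then one g else 0)"
    using assms(5) unfolding galois_ext_def by metis
  interpret GB sc G mul ginv E one \<beta> m xs ys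
    by (unfold_locales) (rule gal)
  show ?thesis
  proof (intro conjI allI impI)
    show "commutant UNIV (invariants G ginv one \<beta>) = {\<Sum>g\<in>G. a g | a. \<forall>g\<in>G. a g \<in> Jset ginv E one \<beta> g}"
    proof
      show "commutant UNIV (invariants G ginv one \<beta>) \<subseteq> {\<Sum>g\<in>G. a g | a. \<forall>g\<in>G. a g \<in> Jset ginv E one \<beta> g}"
      proof
        fix c assume c: "c \<in> commutant UNIV (invariants G ginv one \<beta>)"
        define a where "a g = (\<Sum>i<m. xs i * c * \<beta> g (ys i * one (ginv g)))" for g
        have "c = (\<Sum>g\<in>G. a g)" unfolding a_def using sum_a[OF c] by simp
        moreover have "\<forall>g\<in>G. a g \<in> Jset ginv E one \<beta> g" unfolding a_def using J_elem[OF c] by blast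
        ultimately show "c \<in> {\<Sum>g\<in>G. a g | a. \<forall>g\<in>G. a g \<in> Jset ginv E one \<beta> g}" by blast
      qed
      show "{\<Sum>g\<in>G. a g | a. \<forall>g\<in>G. a g \<in> Jset ginv E one \<beta> g} \<subseteq> commutant UNIV (invariants G ginv one \<beta>)"
        using rev_dir by blast
    qed
  next
    fix a :: "'g \<Rightarrow> 'r"
    assume "(\<forall>g\<in>G. a g \<in> Jset ginv E one \<beta> g) \<and> (\<Sum>g\<in>G. a g) = 0"
    then show "\<forall>g\<in>G. a g = 0" using direct by blast
  qed
qed

end
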